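(* Let $q\ge 7$ and $s\in[1,7]$ be integers, $C$ a finite set with $|C|=2q+s$, and $M\in\mathcal M(6,q,C)$. Suppose the maximum degree of the graph $G$ associated with $M$ equals $3$, $\{i,j,k,l,m,n\}=\{1,\dots,6\}$, and $r(i,l)\ge1$, $r(j,l)\ge1$, $r(k,l)\ge1$. Then $r(l,m,n)\ge q+3s-24$.
   Context: $\mathcal M(6,q,C)$ is the set of $6\times q$ matrices $M$ with entries from $C$ such that each row has $q$ pairwise distinct entries, each column has $6$ pairwise distinct entries, and every pair of distinct colours of $C$ appears together in some row or some column of $M$. The frequency of a colour is the number of entries of $M$ equal to it. For rows $a\ne b$, $r(a,b)$ is the number of colours of frequency exactly $2$ appearing in both row $a$ and row $b$; for distinct rows $a,b,c$, $r(a,b,c)$ is the number of colours of frequency exactly $3$ appearing in each of rows $a,b,c$. The graph $G$ associated with $M$ has vertex set $\{1,\dots,6\}$, with $\{a,b\}$ an edge iff $r(a,b)\ge 1$. *)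

theory Defs
  imports Main
begin

text \<open>A 6 x q matrix with entries from a colour set C is a function M :: nat => nat => 'c,
  with rows indexed by 1..6 and columns by 1..q.\<close>

definition rows6 :: "nat set" where "rows6 = {1..6}"

definition row_set :: "(nat \<Rightarrow> nat \<Rightarrow> 'c) \<Rightarrow> nat \<Rightarrow> nat \<Rightarrow> 'c set" where
  "row_set M q a = (\<lambda>b. M a b) ` {1..q}"

definition col_set :: "(nat \<Rightarrow> nat \<Rightarrow> 'c) \<Rightarrow> nat \<Rightarrow> 'c set" where
  "col_set M b = (\<lambda>a. M a b) ` rows6"

definition in_M6 :: "nat \<Rightarrow> 'c set \<Rightarrow> (nat \<Rightarrow> nat \<Rightarrow> 'c) \<Rightarrow> bool" where
  "in_M6 q C M \<longleftrightarrow>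
     (\<forall>a\<in>rows6. \<forall>b\<in>{1..q}. M a b \<in> C) \<and>
     (\<forall>a\<in>rows6. inj_on (\<lambda>b. M a b) {1..q}) \<and>
     (\<forall>b\<in>{1..q}. inj_on (\<lambda>a. M a b) rows6) \<and>
     (\<forall>x\<in>C. \<forall>y\<in>C. x \<noteq> y \<longrightarrow>
        (\<exists>a\<in>rows6. x \<in> row_set M q a \<and> y \<in> row_set M q a) \<or>
        (\<exists>b\<in>{1..q}. x \<in> col_set M b \<and> y \<in> col_set M b))"

definition freq :: "(nat \<Rightarrow> nat \<Rightarrow> 'c) \<Rightarrow> nat \<Rightarrow> 'c \<Rightarrow> nat" where
  "freq M q x = card {(a, b). a \<in> rows6 \<and> b \<in> {1..q} \<and> M a b = x}"

definition r2 :: "(nat \<Rightarrow> nat \<Rightarrow> 'c) \<Rightarrow> nat \<Rightarrow> nat \<Rightarrow> nat \<Rightarrow> nat" where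
  "r2 M q a b = card {x. freq M q x = 2 \<and> x \<in> row_set M q a \<and> x \<in> row_set M q b}"

definition r3 :: "(nat \<Rightarrow> nat \<Rightarrow> 'c) \<Rightarrow> nat \<Rightarrow> nat \<Rightarrow> nat \<Rightarrow> nat \<Rightarrow> nat" where
  "r3 M q a b c = card {x. freq M q x = 3 \<and> x \<in> row_set M q a \<and> x \<in> row_set M q b
                          \<and> x \<in> row_set M q c}"

definition G_adj :: "(nat \<Rightarrow> nat \<Rightarrow> 'c) \<Rightarrow> nat \<Rightarrow> nat \<Rightarrow> nat \<Rightarrow> bool" where
  "G_adj M q a b \<longleftrightarrow> a \<in> rows6 \<and> b \<in> rows6 \<and> a \<noteq> b \<and> r2 M q a b \<ge> 1"

definition G_degree :: "(nat \<Rightarrow> nat \<Rightarrow> 'c) \<Rightarrow> nat \<Rightarrow> nat \<Rightarrow> nat" where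
  "G_degree M q a = card {b \<in> rows6. G_adj M q a b}"

definition G_max_degree :: "(nat \<Rightarrow> nat \<Rightarrow> 'c) \<Rightarrow> nat \<Rightarrow> nat" where
  "G_max_degree M q = Max (G_degree M q ` rows6)"

end

theory Submission
  imports Defs
begin

lemma freq_rows:
  assumes "in_M6 q C M"
  shows "freq M q x = card {a\<in>rows6. x \<in> row_set M q a}"
proof -
  let ?P = "{(a, b). a \<in> rows6 \<and> b \<in> {1..q} \<and> M a b = x}"
  have inj: "inj_on fst ?P"
  proof (rule inj_onI)
    fix u v assume u: "u \<in> ?P" and v: "v \<in> ?P" and e: "fst u = fst v"
    obtain a b where ab: "u = (a,b)" by (cases u)
    obtain a' b' where ab': "v = (a',b')" by (cases v)
    have "inj_on (\<lambda>b. M a b) {1..q}" using assms u ab unfolding in_M6_def by auto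
    then show "u = v" using u v e ab ab' by (auto dest: inj_onD)
  qed
  have img: "fst ` ?P = {a\<in>rows6. x \<in> row_set M q a}"
    unfolding row_set_def by force
  show ?thesis unfolding freq_def using card_image[OF inj] img by simp
qed

lemma row_props:
  assumes "in_M6 q C M" "a \<in> rows6"
  shows "row_set M q a \<subseteq> C" "card (row_set M q a) = q" "finite (row_set M q a)"
proof -
  show "row_set M q a \<subseteq> C" using assms unfolding in_M6_def row_set_def by auto
  have "inj_on (\<lambda>b. M a b) {1..q}" using assms unfolding in_M6_def by auto
  then show "card (row_set M q a) = q" unfolding row_set_def by (simp add: card_image)
  show "finite (row_set M q a)" unfolding row_set_def by simp
qed

lemma col_card: "card (col_set M c) \<le> 6"
proof -
  have "card (col_set M c) \<le> card rows6" unfolding col_set_def by (rule card_image_le) (simp add: rows6_def)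
  then show ?thesis by (simp add: rows6_def)
qed

lemma key:
  assumes M: "in_M6 q C M" and fC: "finite C"
    and a: "a \<in> rows6" and b: "b \<in> rows6" and ab: "a \<noteq> b"
    and fx: "freq M q x = 2" and xa: "x \<in> row_set M q a" and xb: "x \<in> row_set M q b"
  shows "card C + card (row_set M q a \<inter> row_set M q b) \<le> 2 * q + 8"
proof -
  let ?R = "row_set M q"
  have rows: "{r\<in>rows6. x \<in> ?R r} = {a, b}"
  proof -
    have sub: "{a,b} \<subseteq> {r\<in>rows6. x \<in> ?R r}" using a b xa xb by auto
    have "card {r\<in>rows6. x \<in> ?R r} = 2" using fx freq_rows[OF M] by simp
    moreover have "finite {r\<in>rows6. x \<in> ?R r}" by (simp add: rows6_def)
    moreover have "card {a,b} = 2" using ab by simp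
    ultimately show ?thesis using sub by (metis card_subset_eq)
  qed
  obtain c1 where c1: "c1 \<in> {1..q}" "M a c1 = x" using xa unfolding row_set_def by auto
  obtain c2 where c2: "c2 \<in> {1..q}" "M b c2 = x" using xb unfolding row_set_def by auto
  define S1 where "S1 = (\<lambda>r. M r c1) ` (rows6 - {a,b})"
  define S2 where "S2 = (\<lambda>r. M r c2) ` (rows6 - {a,b})"
  have cS1: "card S1 \<le> 4"
  proof -
    have "card S1 \<le> card (rows6 - {a,b})" unfolding S1_def by (rule card_image_le) (simp add: rows6_def)
    also have "\<dots> = 4" using a b ab by (simp add: rows6_def card_Diff_subset)
    finally show ?thesis .
  qed
  have cS2: "card S2 \<le> 4"
  proof -
    have "card S2 \<le> card (rows6 - {a,b})" unfolding S2_def by (rule card_image_le) (simp add: rows6_def)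
    also have "\<dots> = 4" using a b ab by (simp add: rows6_def card_Diff_subset)
    finally show ?thesis .
  qed
  have cover: "C \<subseteq> ?R a \<union> ?R b \<union> S1 \<union> S2"
  proof
    fix y assume y: "y \<in> C"
    show "y \<in> ?R a \<union> ?R b \<union> S1 \<union> S2"
    proof (cases "y = x")
      case True then show ?thesis using xa by auto
    next
      case False
      have xC: "x \<in> C" using row_props(1)[OF M a] xa by auto
      from M y xC False have
        "(\<exists>r\<in>rows6. x \<in> ?R r \<and> y \<in> ?R r) \<or> (\<exists>c\<in>{1..q}. x \<in> col_set M c \<and> y \<in> col_set M c)"
        unfolding in_M6_def by blast
      then show ?thesis
      proof
        assume "\<exists>r\<in>rows6. x \<in> ?R r \<and> y \<in> ?R r"
        then obtain r where "r \<in> rows6" "x \<in> ?R r" "y \<in> ?R r" by blast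
        then have "r \<in> {a,b}" using rows by blast
        then show ?thesis using \<open>y \<in> ?R r\<close> by auto
      next
        assume "\<exists>c\<in>{1..q}. x \<in> col_set M c \<and> y \<in> col_set M c"
        then obtain c where c: "c \<in> {1..q}" "x \<in> col_set M c" "y \<in> col_set M c" by blast
        then obtain r where r: "r \<in> rows6" "M r c = x" unfolding col_set_def by auto
        then have "x \<in> ?R r" using c unfolding row_set_def by auto
        then have "r \<in> {a,b}" using rows r by blast
        have cc: "c = c1 \<or> c = c2"
        proof (cases "r = a")
          case True
          have "inj_on (\<lambda>b. M a b) {1..q}" using M a unfolding in_M6_def by auto
          then show ?thesis using True r c1 c by (auto dest: inj_onD)
        next
          case False
          then have "r = b" using \<open>r \<in> {a,b}\<close> by auto
          have "inj_on (\<lambda>c. M b c) {1..q}" using M b unfolding in_M6_def by auto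
          then show ?thesis using \<open>r = b\<close> r c2 c by (auto dest: inj_onD)
        qed
        obtain r' where r': "r' \<in> rows6" "M r' c = y" using c unfolding col_set_def by auto
        have "y \<in> ?R r'" if "r' \<in> {a,b}" using r' c that unfolding row_set_def by auto
        then show ?thesis using cc r' unfolding S1_def S2_def by auto
      qed
    qed
  qed
  have fin: "finite (?R a)" "finite (?R b)" using row_props(3)[OF M a] row_props(3)[OF M b] .
  have "card C \<le> card (?R a \<union> ?R b \<union> S1 \<union> S2)"
    by (rule card_mono[OF _ cover]) (simp add: fin S1_def S2_def rows6_def)
  also have "\<dots> \<le> card (?R a \<union> ?R b) + card S1 + card S2"
    by (meson add_le_mono card_Un_le le_refl order_trans)
  finally have "card C \<le> card (?R a \<union> ?R b) + 8" using cS1 cS2 by linarith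
  moreover have "card (?R a \<union> ?R b) + card (?R a \<inter> ?R b) = 2 * q"
    using card_Un_Int[OF fin] row_props(2)[OF M a] row_props(2)[OF M b] by simp
  ultimately show ?thesis by linarith
qed

lemma freq_ge2:
  assumes M: "in_M6 q C M" and fC: "finite C" and cC: "card C \<ge> q + 7"
    and a: "a \<in> rows6" and xa: "x \<in> row_set M q a"
  shows "freq M q x \<ge> 2"
proof (rule ccontr)
  let ?R = "row_set M q"
  assume "\<not> 2 \<le> freq M q x"
  then have le: "card {r\<in>rows6. x \<in> ?R r} \<le> 1" using freq_rows[OF M] by simp
  have rows: "{r\<in>rows6. x \<in> ?R r} = {a}"
  proof -
    have fin: "finite {r\<in>rows6. x \<in> ?R r}" by (simp add: rows6_def)
    have "a \<in> {r\<in>rows6. x \<in> ?R r}" using a xa by auto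
    then show ?thesis using le fin
      by (metis (no_types, lifting) card_1_singletonE card_0_eq empty_iff le_antisym less_one not_le singletonD)
  qed
  obtain c1 where c1: "c1 \<in> {1..q}" "M a c1 = x" using xa unfolding row_set_def by auto
  have cover: "C \<subseteq> ?R a \<union> col_set M c1"
  proof
    fix y assume y: "y \<in> C"
    show "y \<in> ?R a \<union> col_set M c1"
    proof (cases "y = x")
      case True then show ?thesis using xa by auto
    next
      case False
      have xC: "x \<in> C" using row_props(1)[OF M a] xa by auto
      from M y xC False have
        "(\<exists>r\<in>rows6. x \<in> ?R r \<and> y \<in> ?R r) \<or> (\<exists>c\<in>{1..q}. x \<in> col_set M c \<and> y \<in> col_set M c)"
        unfolding in_M6_def by blast
      then show ?thesis
      proof
        assume "\<exists>r\<in>rows6. x \<in> ?R r \<and> y \<in> ?R r"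
        then obtain r where "r \<in> rows6" "x \<in> ?R r" "y \<in> ?R r" by blast
        then have "r = a" using rows by blast
        then show ?thesis using \<open>y \<in> ?R r\<close> by auto
      next
        assume "\<exists>c\<in>{1..q}. x \<in> col_set M c \<and> y \<in> col_set M c"
        then obtain c where c: "c \<in> {1..q}" "x \<in> col_set M c" "y \<in> col_set M c" by blast
        then obtain r where r: "r \<in> rows6" "M r c = x" unfolding col_set_def by auto
        then have "x \<in> ?R r" using c unfolding row_set_def by auto
        then have "r = a" using rows r by blast
        have "inj_on (\<lambda>b. M a b) {1..q}" using M a unfolding in_M6_def by auto
        then have "c = c1" using \<open>r = a\<close> r c1 c by (auto dest: inj_onD)
        then show ?thesis using c by auto
      qed
    qed
  qed
  have "card C \<le> card (?R a \<union> col_set M c1)"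
    by (rule card_mono[OF _ cover]) (simp add: row_props(3)[OF M a] col_set_def rows6_def)
  also have "\<dots> \<le> card (?R a) + card (col_set M c1)" by (rule card_Un_le)
  also have "\<dots> \<le> q + 6" using row_props(2)[OF M a] col_card[of M c1] by simp
  finally show False using cC by simp
qed

lemma r2_sym: "r2 M q a b = r2 M q b a"
  unfolding r2_def by (metis (no_types, lifting) conj_commute)

lemma r2_pos:
  assumes "in_M6 q C M" "a \<in> rows6" "r2 M q a b \<ge> 1"
  shows "\<exists>x. freq M q x = 2 \<and> x \<in> row_set M q a \<and> x \<in> row_set M q b"
proof -
  have "{x. freq M q x = 2 \<and> x \<in> row_set M q a \<and> x \<in> row_set M q b} \<noteq> {}"
    using assms(3) unfolding r2_def by (metis card.empty not_one_le_zero)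
  then show ?thesis by blast
qed

lemma inter_bound:
  assumes M: "in_M6 q C M" and fC: "finite C" and cC: "card C = 2 * q + s"
    and a: "a \<in> rows6" and b: "b \<in> rows6" and ab: "a \<noteq> b" and r: "r2 M q a b \<ge> 1"
  shows "card (row_set M q a \<inter> row_set M q b) + s \<le> 8"
proof -
  obtain x where "freq M q x = 2" "x \<in> row_set M q a" "x \<in> row_set M q b"
    using r2_pos[OF M a r] by blast
  from key[OF M fC a b ab this] cC show ?thesis by simp
qed

lemma r2_ge1:
  assumes M: "in_M6 q C M" and a: "a \<in> rows6"
    and h: "freq M q x = 2 \<and> x \<in> row_set M q a \<and> x \<in> row_set M q b"
  shows "r2 M q a b \<ge> 1"
proof -
  have "{x. freq M q x = 2 \<and> x \<in> row_set M q a \<and> x \<in> row_set M q b} \<subseteq> row_set M q a" by auto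
  then have fin: "finite {x. freq M q x = 2 \<and> x \<in> row_set M q a \<and> x \<in> row_set M q b}"
    using row_props(3)[OF M a] finite_subset by blast
  have "{x. freq M q x = 2 \<and> x \<in> row_set M q a \<and> x \<in> row_set M q b} \<noteq> {}" using h by blast
  then show ?thesis unfolding r2_def using fin by (simp add: Suc_leI card_gt_0_iff)
qed

theorem claim6:
  fixes q s :: nat and C :: "'c set" and M :: "nat \<Rightarrow> nat \<Rightarrow> 'c"
    and i j k l m n :: nat
  assumes "q \<ge> 7" and "1 \<le> s" and "s \<le> 7"
    and "finite C" and "card C = 2 * q + s"
    and "in_M6 q C M"
    and "G_max_degree M q = 3"
    and "{i, j, k, l, m, n} = {1..6}"
    and "r2 M q i l \<ge> 1" and "r2 M q j l \<ge> 1" and "r2 M q k l \<ge> 1"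
  shows "int (r3 M q l m n) \<ge> int q + 3 * int s - 24"
proof -
  let ?R = "row_set M q"
  note M = assms(6)
  have c6: "card {i, j, k, l, m, n} = 6" using assms(8) by simp
  have dist: "distinct [i, j, k, l, m, n]"
  proof (rule ccontr)
    assume "\<not> distinct [i, j, k, l, m, n]"
    then have "card {i, j, k, l, m, n} \<le> 5"
      by (auto simp: card_insert_if intro: le_trans[OF card_insert_le] card_insert_le)
    then show False using c6 by simp
  qed
  have R6: "rows6 = {i, j, k, l, m, n}" using assms(8) by (simp add: rows6_def)
  have inr: "i \<in> rows6" "j \<in> rows6" "k \<in> rows6" "l \<in> rows6" "m \<in> rows6" "n \<in> rows6"
    using R6 by auto
  have rl: "r2 M q l i \<ge> 1" "r2 M q l j \<ge> 1" "r2 M q l k \<ge> 1"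
    using assms(9-11) r2_sym by metis+
  have bi: "card (?R l \<inter> ?R i) + s \<le> 8" 
    using inter_bound[OF M assms(4,5) inr(4) inr(1) _ rl(1)] dist by fastforce
  have bj: "card (?R l \<inter> ?R j) + s \<le> 8" 
    using inter_bound[OF M assms(4,5) inr(4) inr(2) _ rl(2)] dist by fastforce
  have bk: "card (?R l \<inter> ?R k) + s \<le> 8" 
    using inter_bound[OF M assms(4,5) inr(4) inr(3) _ rl(3)] dist by fastforce
  have deg: "G_degree M q l \<le> 3"
    using assms(7) inr(4) unfolding G_max_degree_def by (metis Max_ge finite_imageI finite_atLeastAtMost image_eqI rows6_def)
  have noadj: "\<not> G_adj M q l m" "\<not> G_adj M q l n"
  proof -
    have adj: "G_adj M q l i" "G_adj M q l j" "G_adj M q l k"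
      using rl inr dist unfolding G_adj_def by auto
    have fin: "finite {b \<in> rows6. G_adj M q l b}" by (simp add: rows6_def)
    show "\<not> G_adj M q l m"
    proof
      assume "G_adj M q l m"
      then have "{i,j,k,m} \<subseteq> {b \<in> rows6. G_adj M q l b}" using adj inr by auto
      then have "card {i,j,k,m} \<le> G_degree M q l" unfolding G_degree_def using fin by (rule card_mono[rotated])
      moreover have "card {i,j,k,m} = 4" using dist by simp
      ultimately show False using deg by simp
    qed
    show "\<not> G_adj M q l n"
    proof
      assume "G_adj M q l n"
      then have "{i,j,k,n} \<subseteq> {b \<in> rows6. G_adj M q l b}" using adj inr by auto
      then have "card {i,j,k,n} \<le> G_degree M q l" unfolding G_degree_def using fin by (rule card_mono[rotated])
      moreover have "card {i,j,k,n} = 4" using dist by simp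
      ultimately show False using deg by simp
    qed
  qed
  have nom: "\<not> (freq M q x = 2 \<and> x \<in> ?R l \<and> x \<in> ?R m)" for x
  proof
    assume h: "freq M q x = 2 \<and> x \<in> ?R l \<and> x \<in> ?R m"
    have "r2 M q l m \<ge> 1" using r2_ge1[OF M inr(4) h] .
    then show False using noadj(1) inr dist unfolding G_adj_def by auto
  qed
  have non: "\<not> (freq M q x = 2 \<and> x \<in> ?R l \<and> x \<in> ?R n)" for x
  proof
    assume h: "freq M q x = 2 \<and> x \<in> ?R l \<and> x \<in> ?R n"
    have "r2 M q l n \<ge> 1" using r2_ge1[OF M inr(4) h] .
    then show False using noadj(2) inr dist unfolding G_adj_def by auto
  qed
  let ?T = "{x. freq M q x = 3 \<and> x \<in> ?R l \<and> x \<in> ?R m \<and> x \<in> ?R n}"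
  have cover: "?R l \<subseteq> (?R l \<inter> ?R i) \<union> (?R l \<inter> ?R j) \<union> (?R l \<inter> ?R k) \<union> ?T"
  proof
    fix x assume xl: "x \<in> ?R l"
    show "x \<in> (?R l \<inter> ?R i) \<union> (?R l \<inter> ?R j) \<union> (?R l \<inter> ?R k) \<union> ?T"
    proof (cases "x \<in> ?R i \<or> x \<in> ?R j \<or> x \<in> ?R k")
      case True then show ?thesis using xl by auto
    next
      case False
      let ?S = "{r\<in>rows6. x \<in> ?R r}"
      have S: "?S = {l} \<union> (if x \<in> ?R m then {m} else {}) \<union> (if x \<in> ?R n then {n} else {})"
        using False xl R6 by auto
      have f2: "freq M q x \<ge> 2" using freq_ge2[OF M assms(4) _ inr(4) xl] assms(1,5) by simp
      have fS: "freq M q x = card ?S" using freq_rows[OF M] .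
      show ?thesis
      proof (cases "x \<in> ?R m")
        case Tm: True
        show ?thesis
        proof (cases "x \<in> ?R n")
          case True
          then have "freq M q x = 3" using fS S Tm dist by (auto simp: card_insert_if)
          then show ?thesis using xl Tm True by auto
        next
          case False
          then have "freq M q x = 2" using fS S Tm dist by (auto simp: card_insert_if)
          then show ?thesis using nom xl Tm by blast
        qed
      next
        case Fm: False
        show ?thesis
        proof (cases "x \<in> ?R n")
          case True
          then have "freq M q x = 2" using fS S Fm dist by (auto simp: card_insert_if)
          then show ?thesis using non xl True by blast
        next
          case False
          then have "freq M q x = 1" using fS S Fm dist by (auto simp: card_insert_if)
          then show ?thesis using f2 by simp
        qed
      qed
    qed
  qed
  have finl: "finite (?R l)" using row_props(3)[OF M inr(4)] .
  have "q \<le> card ((?R l \<inter> ?R i) \<union> (?R l \<inter> ?R j) \<union> (?R l \<inter> ?R k) \<union> ?T)"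
    using card_mono[OF _ cover] row_props(2)[OF M inr(4)] finl by simp
  also have "\<dots> \<le> card (?R l \<inter> ?R i) + card (?R l \<inter> ?R j) + card (?R l \<inter> ?R k) + card ?T"
    by (meson add_le_mono card_Un_le le_refl order_trans)
  finally have "q \<le> card (?R l \<inter> ?R i) + card (?R l \<inter> ?R j) + card (?R l \<inter> ?R k) + r3 M q l m n"
    unfolding r3_def .
  then show ?thesis using bi bj bk by linarith
qed

end
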